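(* Consider binary classification with $\mathcal Y=\{-1,+1\}$ and suppose ${\mathbb P}(Y=+1)={\mathbb P}(Y=-1)$. Let $f(v)=\tfrac12|v-1|$ (Total Variation). Then a maximizer $h^*_f\in\arg\max_h D_f(P_{h\times Y}\,\|\,Q_{h\times Y})$, the maximum being over all classifiers $h:\mathcal X\to\{-1,+1\}$, is the Bayes optimal classifier, i.e. $h^*_f\in\arg\max_h {\mathbb P}(h(X)=Y)$.
   Context: $(X,Y)$ is a random pair with features $X\in\mathcal X$ and label $Y\in\{-1,+1\}$. A classifier is a measurable map $h:\mathcal X\to\{-1,+1\}$. $P_{h\times Y}$ denotes the joint distribution of $(h(X),Y)$ on $\{-1,+1\}^2$, i.e. $P_{h\times Y}(y,y')={\mathbb P}(h(X)=y,Y=y')$, and $Q_{h\times Y}$ the product of its marginals, $Q_{h\times Y}(y,y')={\mathbb P}(h(X)=y)\,{\mathbb P}(Y=y')$. For a convex $f$ with $f(1)=0$ and distributions $P,Q$ on a finite set with masses $p,q$, $D_f(P\|Q)=\sum_z q(z) f(p(z)/q(z))$. For $f(v)=\frac12|v-1|$ this is $D_f(P\|Q)=\frac12\sum_z|p(z)-q(z)|$. *)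

theory Defs
  imports "HOL-Probability.Probability"
begin

definition labels :: "int set" where "labels = {-1, 1}"

definition classifier :: "'b measure \<Rightarrow> ('b \<Rightarrow> int) \<Rightarrow> bool" where
  "classifier N h \<longleftrightarrow> h \<in> measurable N (count_space UNIV) \<and> (\<forall>x\<in>space N. h x \<in> labels)"

definition P_joint :: "'a measure \<Rightarrow> ('a \<Rightarrow> 'b) \<Rightarrow> ('a \<Rightarrow> int) \<Rightarrow> ('b \<Rightarrow> int) \<Rightarrow> int \<Rightarrow> int \<Rightarrow> real" where
  "P_joint M X Y h y y' = measure M {\<omega> \<in> space M. h (X \<omega>) = y \<and> Y \<omega> = y'}"

definition Q_prod :: "'a measure \<Rightarrow> ('a \<Rightarrow> 'b) \<Rightarrow> ('a \<Rightarrow> int) \<Rightarrow> ('b \<Rightarrow> int) \<Rightarrow> int \<Rightarrow> int \<Rightarrow> real" where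
  "Q_prod M X Y h y y' = measure M {\<omega> \<in> space M. h (X \<omega>) = y} * measure M {\<omega> \<in> space M. Y \<omega> = y'}"

definition f_div :: "(real \<Rightarrow> real) \<Rightarrow> (int \<Rightarrow> int \<Rightarrow> real) \<Rightarrow> (int \<Rightarrow> int \<Rightarrow> real) \<Rightarrow> real" where
  "f_div f p q = (\<Sum>(y, y') \<in> labels \<times> labels. q y y' * f (p y y' / q y y'))"

definition f_TV :: "real \<Rightarrow> real" where "f_TV v = \<bar>v - 1\<bar> / 2"

definition div_obj :: "(real \<Rightarrow> real) \<Rightarrow> 'a measure \<Rightarrow> ('a \<Rightarrow> 'b) \<Rightarrow> ('a \<Rightarrow> int) \<Rightarrow> ('b \<Rightarrow> int) \<Rightarrow> real" where
  "div_obj f M X Y h = f_div f (P_joint M X Y h) (Q_prod M X Y h)"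

definition accuracy :: "'a measure \<Rightarrow> ('a \<Rightarrow> 'b) \<Rightarrow> ('a \<Rightarrow> int) \<Rightarrow> ('b \<Rightarrow> int) \<Rightarrow> real" where
  "accuracy M X Y h = measure M {\<omega> \<in> space M. h (X \<omega>) = Y \<omega>}"

end

theory Submission
  imports Defs
begin

lemma distr_restr_measure:
  assumes P: "prob_space M" and Xm: "X \<in> measurable M N" and S: "S \<in> sets M" and A: "A \<in> sets N"
  shows "measure (distr (restrict_space M S) N X) A = measure M {\<omega>\<in>space M. X \<omega> \<in> A \<and> \<omega> \<in> S}"
proof -
  have sp: "space (restrict_space M S) = S" using S sets.sets_into_space by (auto simp: space_restrict_space)
  have "measure (distr (restrict_space M S) N X) A = measure (restrict_space M S) (X -` A \<inter> S)"
    using measure_distr[OF measurable_restrict_space1[OF Xm] A] sp by simp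
  also have "\<dots> = measure M (X -` A \<inter> S)"
    by (rule measure_restrict_space) (use S sets.sets_into_space in auto)
  also have "X -` A \<inter> S = {\<omega>\<in>space M. X \<omega> \<in> A \<and> \<omega> \<in> S}" using S sets.sets_into_space by auto
  finally show ?thesis .
qed

lemma hahn_max:
  assumes P: "prob_space M" and Xm: "X \<in> measurable M N" and Ym: "Y \<in> measurable M (count_space UNIV)"
  defines "g \<equiv> \<lambda>A. measure M {\<omega>\<in>space M. X \<omega> \<in> A \<and> Y \<omega> = (1::int)} - measure M {\<omega>\<in>space M. X \<omega> \<in> A \<and> Y \<omega> = -1}"
  shows "\<exists>Z\<in>sets N. \<forall>A\<in>sets N. g A \<le> g Z"
proof -
  interpret prob_space M by fact
  define S1 where "S1 = {\<omega>\<in>space M. Y \<omega> = 1}"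
  define S2 where "S2 = {\<omega>\<in>space M. Y \<omega> = -1}"
  have S1: "S1 \<in> sets M" unfolding S1_def using Ym by measurable
  have S2: "S2 \<in> sets M" unfolding S2_def using Ym by measurable
  define m1 where "m1 = distr (restrict_space M S1) N X"
  define m2 where "m2 = distr (restrict_space M S2) N X"
  have f1: "finite_measure m1" unfolding m1_def
    by (rule finite_measure.finite_measure_distr[OF finite_measure_restrict_space[OF finite_measure S1] measurable_restrict_space1[OF Xm]])
  have f2: "finite_measure m2" unfolding m2_def
    by (rule finite_measure.finite_measure_distr[OF finite_measure_restrict_space[OF finite_measure S2] measurable_restrict_space1[OF Xm]])
  have s1: "sets m1 = sets N" "sets m2 = sets N" unfolding m1_def m2_def by auto
  have e1: "measure m1 A = measure M {\<omega>\<in>space M. X \<omega> \<in> A \<and> Y \<omega> = 1}" if "A \<in> sets N" for A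
    proof -
    have "{\<omega>\<in>space M. X \<omega> \<in> A \<and> \<omega> \<in> S1} = {\<omega>\<in>space M. X \<omega> \<in> A \<and> Y \<omega> = 1}" by (auto simp: S1_def)
    then show ?thesis unfolding m1_def using distr_restr_measure[OF P Xm S1 that] by simp
  qed
  have e2: "measure m2 A = measure M {\<omega>\<in>space M. X \<omega> \<in> A \<and> Y \<omega> = -1}" if "A \<in> sets N" for A
    proof -
    have "{\<omega>\<in>space M. X \<omega> \<in> A \<and> \<omega> \<in> S2} = {\<omega>\<in>space M. X \<omega> \<in> A \<and> Y \<omega> = -1}" by (auto simp: S2_def)
    then show ?thesis unfolding m2_def using distr_restr_measure[OF P Xm S2 that] by simp
  qed
  interpret F1: finite_measure m1 by fact
  interpret F2: finite_measure m2 by fact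
  obtain Z where Z: "Z \<in> sets m1" and Zp: "\<forall>B\<in>sets m1. B \<subseteq> Z \<longrightarrow> m2 B \<le> m1 B"
    and Zn: "\<forall>B\<in>sets m1. B \<inter> Z = {} \<longrightarrow> m1 B \<le> m2 B"
    using finite_unsigned_Hahn_decomposition[OF f1 f2] s1 by auto
  have Zp': "measure m2 B \<le> measure m1 B" if "B \<in> sets N" "B \<subseteq> Z" for B
    using Zp that s1 by (simp add: F1.emeasure_eq_measure F2.emeasure_eq_measure)
  have Zn': "measure m1 B \<le> measure m2 B" if "B \<in> sets N" "B \<inter> Z = {}" for B
    using Zn that s1 by (simp add: F1.emeasure_eq_measure F2.emeasure_eq_measure)
  have gm: "g A = measure m1 A - measure m2 A" if "A \<in> sets N" for A
    using e1[OF that] e2[OF that] by (simp add: g_def)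
  show ?thesis
  proof (intro bexI ballI)
    show "Z \<in> sets N" using Z s1 by simp
    fix A assume A: "A \<in> sets N"
    have ZN: "Z \<in> sets N" using Z s1 by simp
    have a1: "measure m1 A = measure m1 (A \<inter> Z) + measure m1 (A - Z)"
      using F1.finite_measure_Union[of "A \<inter> Z" "A - Z"] A ZN s1 by (simp add: Int_Diff_Un Diff_disjoint Int_Diff_disjoint)
    have a2: "measure m2 A = measure m2 (A \<inter> Z) + measure m2 (A - Z)"
      using F2.finite_measure_Union[of "A \<inter> Z" "A - Z"] A ZN s1 by (simp add: Int_Diff_Un Diff_disjoint Int_Diff_disjoint)
    have dj: "(Z - A) \<inter> (A \<inter> Z) = {}" "(A \<inter> Z) \<inter> (Z - A) = {}" by blast+
    have b1: "measure m1 Z = measure m1 (A \<inter> Z) + measure m1 (Z - A)"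
      using F1.finite_measure_Union[of "A \<inter> Z" "Z - A"] A ZN s1 Int_Diff_Un[of Z A] dj by (simp add: Int_commute Un_commute)
    have b2: "measure m2 Z = measure m2 (A \<inter> Z) + measure m2 (Z - A)"
      using F2.finite_measure_Union[of "A \<inter> Z" "Z - A"] A ZN s1 Int_Diff_Un[of Z A] dj by (simp add: Int_commute Un_commute)
    have c1: "measure m1 (A - Z) \<le> measure m2 (A - Z)" using Zn' A ZN by auto
    have c2: "measure m2 (Z - A) \<le> measure m1 (Z - A)" using Zp' A ZN by auto
    show "g A \<le> g Z" using gm[OF A] gm[OF ZN] a1 a2 b1 b2 c1 c2 by linarith
  qed
qed


lemma tv_term:
  assumes "(q::real) \<ge> 0" "q = 0 \<Longrightarrow> p = 0"
  shows "q * f_TV (p/q) = \<bar>p - q\<bar>/2"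
proof (cases "q = 0")
  case True then show ?thesis using assms by (simp add: f_TV_def)
next
  case False
  then have "q * \<bar>p/q - 1\<bar> = \<bar>q * (p/q - 1)\<bar>" using assms by (simp add: abs_mult)
  also have "q * (p/q - 1) = p - q" using False by (simp add: field_simps)
  finally show ?thesis by (simp add: f_TV_def)
qed

lemma sum_labels2: "(\<Sum>(y, y') \<in> labels \<times> labels. F y y') = F 1 1 + F 1 (-1) + F (-1) 1 + F (-1) (-1)"
  by (simp add: labels_def ac_simps)

lemma key:
  assumes P: "prob_space M" and Xm: "X \<in> measurable M N" and Ym: "Y \<in> measurable M (count_space UNIV)"
    and Yl: "\<forall>\<omega>\<in>space M. Y \<omega> \<in> labels"
    and bal: "measure M {\<omega> \<in> space M. Y \<omega> = 1} = measure M {\<omega> \<in> space M. Y \<omega> = -1}"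
    and hc: "classifier N h"
  defines "g \<equiv> \<lambda>A. measure M {\<omega>\<in>space M. X \<omega> \<in> A \<and> Y \<omega> = (1::int)} - measure M {\<omega>\<in>space M. X \<omega> \<in> A \<and> Y \<omega> = -1}"
  shows "div_obj f_TV M X Y h = \<bar>g {x\<in>space N. h x = 1}\<bar> \<and> accuracy M X Y h = 1/2 + g {x\<in>space N. h x = 1}"
proof -
  interpret prob_space M by fact
  have hm: "h \<in> measurable N (count_space UNIV)" and hl: "\<forall>x\<in>space N. h x \<in> labels"
    using hc by (auto simp: classifier_def)
  have hX[measurable]: "(\<lambda>\<omega>. h (X \<omega>)) \<in> measurable M (count_space UNIV)"
    using measurable_comp[OF Xm hm] by (simp add: comp_def)
  note Ym[measurable]
  define E where "E y y' = {\<omega>\<in>space M. h (X \<omega>) = y \<and> Y \<omega> = y'}" for y y' :: int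
  define H where "H y = {\<omega>\<in>space M. h (X \<omega>) = y}" for y :: int
  define S where "S y' = {\<omega>\<in>space M. Y \<omega> = y'}" for y' :: int
  have Em: "E y y' \<in> events" for y y' unfolding E_def by measurable
  have XN: "X \<omega> \<in> space N" if "\<omega> \<in> space M" for \<omega> using Xm that by (auto simp: measurable_def)
  have hl': "h (X \<omega>) = 1 \<or> h (X \<omega>) = -1" if "\<omega> \<in> space M" for \<omega> using hl XN[OF that] by (auto simp: labels_def)
  have Yl': "Y \<omega> = 1 \<or> Y \<omega> = -1" if "\<omega> \<in> space M" for \<omega> using Yl that by (auto simp: labels_def)
  have HE: "prob (H y) = prob (E y 1) + prob (E y (-1))" for y
  proof -
    have "H y = E y 1 \<union> E y (-1)" using Yl' by (auto simp: H_def E_def)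
    moreover have "E y 1 \<inter> E y (-1) = {}" by (auto simp: E_def)
    ultimately show ?thesis using finite_measure_Union[OF Em Em] by simp
  qed
  have SE: "prob (S y') = prob (E 1 y') + prob (E (-1) y')" for y'
  proof -
    have "S y' = E 1 y' \<union> E (-1) y'" using hl' by (auto simp: S_def E_def)
    moreover have "E 1 y' \<inter> E (-1) y' = {}" by (auto simp: E_def)
    ultimately show ?thesis using finite_measure_Union[OF Em Em] by simp
  qed
  have tot: "prob (S 1) + prob (S (-1)) = 1"
  proof -
    have Sm: "S y \<in> events" for y unfolding S_def by measurable
    have "space M = S 1 \<union> S (-1)" using Yl' by (auto simp: S_def)
    moreover have "S 1 \<inter> S (-1) = {}" by (auto simp: S_def)
    ultimately show ?thesis using finite_measure_Union[OF Sm Sm] prob_space by simp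
  qed
  have half: "prob (S 1) = 1/2" "prob (S (-1)) = 1/2" using tot bal by (auto simp: S_def)
  have gA: "g {x\<in>space N. h x = 1} = prob (E 1 1) - prob (E 1 (-1))"
  proof -
    have "{\<omega>\<in>space M. X \<omega> \<in> {x\<in>space N. h x = 1} \<and> Y \<omega> = y'} = E 1 y'" for y'
      using XN by (auto simp: E_def)
    then show ?thesis by (simp add: g_def)
  qed
  have PJ: "P_joint M X Y h y y' = prob (E y y')" for y y' by (simp add: P_joint_def E_def)
  have QP: "Q_prod M X Y h y y' = prob (H y) * prob (S y')" for y y' by (simp add: Q_prod_def H_def S_def)
  have EH: "prob (E y y') \<le> prob (H y)" for y y'
    by (rule finite_measure_mono) (auto simp: E_def H_def intro: Em)
  have tm: "Q_prod M X Y h y y' * f_TV (P_joint M X Y h y y' / Q_prod M X Y h y y')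
      = \<bar>prob (E y y') - prob (H y) / 2\<bar> / 2" if "y' = 1 \<or> y' = -1" for y y'
  proof -
    have "prob (S y') = 1/2" using that half by auto
    then have q: "Q_prod M X Y h y y' = prob (H y) / 2" by (simp add: QP)
    have "Q_prod M X Y h y y' * f_TV (P_joint M X Y h y y' / Q_prod M X Y h y y')
        = \<bar>P_joint M X Y h y y' - Q_prod M X Y h y y'\<bar>/2"
    proof (rule tv_term)
      have "0 \<le> prob (H y)" by simp
      then show "0 \<le> Q_prod M X Y h y y'" using q by linarith
      show "P_joint M X Y h y y' = 0" if "Q_prod M X Y h y y' = 0"
        using that q EH[of y y'] measure_nonneg[of M "E y y'"] by (simp add: PJ)
    qed
    then show ?thesis by (simp add: q PJ)
  qed
  have D: "div_obj f_TV M X Y h = (\<bar>prob (E 1 1) - prob (H 1) / 2\<bar> + \<bar>prob (E 1 (-1)) - prob (H 1) / 2\<bar>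
      + \<bar>prob (E (-1) 1) - prob (H (-1)) / 2\<bar> + \<bar>prob (E (-1) (-1)) - prob (H (-1)) / 2\<bar>) / 2"
    unfolding div_obj_def f_div_def sum_labels2 using tm by simp
  have acc: "accuracy M X Y h = prob (E 1 1) + prob (E (-1) (-1))"
  proof -
    have "{\<omega> \<in> space M. h (X \<omega>) = Y \<omega>} = E 1 1 \<union> E (-1) (-1)" using hl' by (auto simp: E_def) (metis hl')+
    moreover have "E 1 1 \<inter> E (-1) (-1) = {}" by (auto simp: E_def)
    ultimately show ?thesis unfolding accuracy_def using finite_measure_Union[OF Em Em] by simp
  qed
  define a where "a = prob (E 1 1)"
  define b where "b = prob (E 1 (-1))"
  define c where "c = prob (E (-1) 1)"
  define d where "d = prob (E (-1) (-1))"
  have h1: "prob (H 1) = a + b" and h2: "prob (H (-1)) = c + d" and s1: "a + c = 1/2" and s2: "b + d = 1/2"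
    using HE[of 1] HE[of "-1"] SE[of 1] SE[of "-1"] half by (simp_all add: a_def b_def c_def d_def)
  have t1: "\<bar>a - (a+b)/2\<bar> = \<bar>a - b\<bar>/2" "\<bar>b - (a+b)/2\<bar> = \<bar>a - b\<bar>/2"
    "\<bar>c - (c+d)/2\<bar> = \<bar>a - b\<bar>/2" "\<bar>d - (c+d)/2\<bar> = \<bar>a - b\<bar>/2"
    using s1 s2 by (auto simp: abs_if field_simps)
  have "div_obj f_TV M X Y h = \<bar>a - b\<bar>"
    using D t1 unfolding h1 h2 a_def[symmetric] b_def[symmetric] c_def[symmetric] d_def[symmetric] by simp
  moreover have "accuracy M X Y h = 1/2 + (a - b)" using acc s2 by (simp add: a_def d_def b_def) 
  ultimately show ?thesis using gA by (simp add: a_def b_def)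
qed


theorem theorem1:
  fixes M :: "'a measure" and N :: "'b measure"
    and X :: "'a \<Rightarrow> 'b" and Y :: "'a \<Rightarrow> int"
  assumes "prob_space M"
    and "X \<in> measurable M N"
    and "Y \<in> measurable M (count_space UNIV)"
    and "\<forall>\<omega>\<in>space M. Y \<omega> \<in> labels"
    and "measure M {\<omega> \<in> space M. Y \<omega> = 1} = measure M {\<omega> \<in> space M. Y \<omega> = -1}"
  shows "\<exists>hstar. classifier N hstar
           \<and> (\<forall>h. classifier N h \<longrightarrow> div_obj f_TV M X Y h \<le> div_obj f_TV M X Y hstar)
           \<and> (\<forall>h. classifier N h \<longrightarrow> accuracy M X Y h \<le> accuracy M X Y hstar)"
proof -
  note P = assms(1) and Xm = assms(2) and Ym = assms(3)
  interpret prob_space M by fact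
  define g where "g \<equiv> \<lambda>A. measure M {\<omega>\<in>space M. X \<omega> \<in> A \<and> Y \<omega> = (1::int)} - measure M {\<omega>\<in>space M. X \<omega> \<in> A \<and> Y \<omega> = -1}"
  obtain Z where ZN: "Z \<in> sets N" and Zmax: "\<And>A. A \<in> sets N \<Longrightarrow> g A \<le> g Z"
    using hahn_max[OF P Xm Ym] unfolding g_def by blast
  note Xm[measurable] Ym[measurable] ZN[measurable]
  have XN: "X \<omega> \<in> space N" if "\<omega> \<in> space M" for \<omega> using Xm that by (auto simp: measurable_def)
  have split: "measure M {\<omega>\<in>space M. X \<omega> \<in> A \<and> Y \<omega> = y} + measure M {\<omega>\<in>space M. X \<omega> \<in> space N - A \<and> Y \<omega> = y}
      = measure M {\<omega>\<in>space M. Y \<omega> = y}" if A: "A \<in> sets N" for A y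
  proof -
    have m1: "{\<omega>\<in>space M. X \<omega> \<in> A \<and> Y \<omega> = y} \<in> events" using A by measurable
    have m2: "{\<omega>\<in>space M. X \<omega> \<in> space N - A \<and> Y \<omega> = y} \<in> events" using A by measurable
    have "{\<omega>\<in>space M. Y \<omega> = y} = {\<omega>\<in>space M. X \<omega> \<in> A \<and> Y \<omega> = y} \<union> {\<omega>\<in>space M. X \<omega> \<in> space N - A \<and> Y \<omega> = y}"
      using XN by auto
    moreover have "{\<omega>\<in>space M. X \<omega> \<in> A \<and> Y \<omega> = y} \<inter> {\<omega>\<in>space M. X \<omega> \<in> space N - A \<and> Y \<omega> = y} = {}" by auto
    ultimately show ?thesis using finite_measure_Union[OF m1 m2] by simp
  qed
  have gc: "g A + g (space N - A) = 0" if "A \<in> sets N" for A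
    using split[OF that, of 1] split[OF that, of "-1"] assms(5) unfolding g_def by linarith
  define hs where "hs = (\<lambda>x. if x \<in> Z then (1::int) else -1)"
  have hsc: "classifier N hs" unfolding classifier_def hs_def labels_def by (auto simp: measurable_If_set)
  have hsA: "{x\<in>space N. hs x = 1} = Z" using sets.sets_into_space[OF ZN] by (auto simp: hs_def)
  have key_hs: "div_obj f_TV M X Y hs = \<bar>g Z\<bar>" "accuracy M X Y hs = 1/2 + g Z"
    using key[OF assms hsc] hsA unfolding g_def by auto
  have g0: "g Z \<ge> 0" using Zmax[of "{}"] by (simp add: g_def)
  show ?thesis
  proof (intro exI conjI allI impI)
    show "classifier N hs" by fact
    fix h assume hc: "classifier N h"
    have hm: "h \<in> measurable N (count_space UNIV)" using hc by (auto simp: classifier_def)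
    have Ah: "{x\<in>space N. h x = 1} \<in> sets N" using hm by measurable
    have k: "div_obj f_TV M X Y h = \<bar>g {x\<in>space N. h x = 1}\<bar>" "accuracy M X Y h = 1/2 + g {x\<in>space N. h x = 1}"
      using key[OF assms hc] unfolding g_def by auto
    have l1: "g {x\<in>space N. h x = 1} \<le> g Z" using Zmax[OF Ah] .
    have l2: "g (space N - {x\<in>space N. h x = 1}) \<le> g Z" using Zmax Ah by blast
    show "div_obj f_TV M X Y h \<le> div_obj f_TV M X Y hs"
      using k key_hs l1 l2 gc[OF Ah] g0 by linarith
    show "accuracy M X Y h \<le> accuracy M X Y hs" using k key_hs l1 by linarith
  qed
qed

end
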